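(* Let $m\geq 2$ and $n\geq 3$ be integers and let $M$ be the adjacency matrix of the oriented Dutch windmill graph $D^m_n$, and let $I$ denote the identity matrix of order $m(n-1)+1$. Then: (1) $M^{2n-1}=mM^{n-1}$; (2) $M^{n-1}\neq 0$; (3) $M^{2n-2}\neq mM^{n-2}$; (4) $M^n\neq mI$; (5) $M^{n^2-1}=m^{n-1}M^{n-1}$.
   Context: For integers $m\geq 1$, $n\geq 3$, the oriented Dutch windmill graph $D^m_n$ is the directed graph with vertex set $V=\{1,2,\ldots,m(n-1)+1\}$ whose directed edges $(a,b)$ are exactly: $(1,(k-1)(n-1)+2)$ for $k\in\{1,\ldots,m\}$; $((k-1)(n-1)+i,(k-1)(n-1)+i+1)$ for $k\in\{1,\ldots,m\}$ and $i\in\{2,\ldots,n-1\}$; and $((k-1)(n-1)+n,1)$ for $k\in\{1,\ldots,m\}$. Its adjacency matrix $M=(a_{ij})$ is the real square matrix with $a_{ij}=1$ if $(i,j)$ is an edge and $a_{ij}=0$ otherwise. *)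

theory Defs
  imports "Jordan_Normal_Form.Matrix"
begin

definition windmill_edge :: "nat \<Rightarrow> nat \<Rightarrow> nat \<Rightarrow> nat \<Rightarrow> bool" where
  "windmill_edge m n a b \<longleftrightarrow>
     (\<exists>k\<in>{1..m}. a = 1 \<and> b = (k - 1) * (n - 1) + 2) \<or>
     (\<exists>k\<in>{1..m}. \<exists>i\<in>{2..n-1}. a = (k - 1) * (n - 1) + i \<and> b = (k - 1) * (n - 1) + i + 1) \<or>
     (\<exists>k\<in>{1..m}. a = (k - 1) * (n - 1) + n \<and> b = 1)"

text \<open>Adjacency matrix; vertex v corresponds to (0-based) row/column index v - 1.\<close>
definition windmill_adj :: "nat \<Rightarrow> nat \<Rightarrow> real mat" where
  "windmill_adj m n = mat (m * (n - 1) + 1) (m * (n - 1) + 1)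
      (\<lambda>(i, j). if windmill_edge m n (i + 1) (j + 1) then 1 else 0)"

end

theory Submission
  imports Defs
begin


lemma rep_uniq:
  fixes d q1 q2 r1 r2 :: nat
  assumes "d > 0" "1 \<le> r1" "r1 \<le> d" "1 \<le> r2" "r2 \<le> d" "q1*d+r1 = q2*d+r2"
  shows "q1 = q2 \<and> r1 = r2"
proof -
  obtain s1 s2 where s: "r1 = Suc s1" "r2 = Suc s2" using assms by (metis Suc_le_D One_nat_def)
  have l: "s1 < d" "s2 < d" using s assms by auto
  have e: "q1*d+s1 = q2*d+s2" using assms s by simp
  have "(q1*d+s1) div d = q1" "(q2*d+s2) div d = q2" using l by auto
  moreover have "(q1*d+s1) mod d = s1" "(q2*d+s2) mod d = s2" using l by auto
  ultimately show ?thesis using e s by metis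
qed

lemma edge_v:
  assumes "n \<ge> 3" "j < m" "1 \<le> i" "i \<le> n - 1"
  shows "windmill_edge m n (j*(n-1)+i+1) y \<longleftrightarrow> (if i < n-1 then y = j*(n-1)+i+2 else y = 1)"
proof
  assume "windmill_edge m n (j*(n-1)+i+1) y"
  then consider (a) "j*(n-1)+i+1 = 1"
    | (b) k i' where "k \<in> {1..m}" "i' \<in> {2..n-1}" "j*(n-1)+i+1 = (k-1)*(n-1)+i'" "y = (k - 1) * (n - 1) + i' + 1"
    | (c) k where "k \<in> {1..m}" "j*(n-1)+i+1 = (k-1)*(n-1)+n" "y = 1"
    unfolding windmill_edge_def by blast
  then show "(if i < n-1 then y = j*(n-1)+i+2 else y = 1)"
  proof cases
    case a then show ?thesis using assms by simp
  next
    case (b k i')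
    show ?thesis
    proof (cases "i < n-1")
      case True
      then have "j*(n-1)+(i+1) = (k-1)*(n-1)+i'" using b by simp
      then have "j = k-1 \<and> i+1 = i'" using rep_uniq[of "n-1" "i+1" i' j "k-1"] b True assms by auto
      then show ?thesis using b True by simp
    next
      case False
      then have "i = n-1" using assms by simp
      then have "(j+1)*(n-1)+1 = (k-1)*(n-1)+i'" using b assms by simp
      then have "1 = i'" using rep_uniq[of "n-1" 1 i' "j+1" "k-1"] b assms by auto
      then show ?thesis using b by simp
    qed
  next
    case (c k)
    show ?thesis
    proof (cases "i < n-1")
      case True
      have "j*(n-1)+(i+1) = k*(n-1)+1" using c assms
        by (smt (verit) Nat.add_diff_assoc One_nat_def Suc_diff_le add.commute add.left_commute add_diff_cancel_left' atLeastAtMost_iff le_add_diff_inverse mult_Suc not_less_eq_eq numeral_3_eq_3 plus_1_eq_Suc)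
      then have "i+1 = 1" using rep_uniq[of "n-1" "i+1" 1 j k] True assms by auto
      then show ?thesis using assms by simp
    next
      case False
      then show ?thesis using c by simp
    qed
  qed
next
  assume h: "(if i < n-1 then y = j*(n-1)+i+2 else y = 1)"
  show "windmill_edge m n (j*(n-1)+i+1) y"
  proof (cases "i < n-1")
    case True
    then show ?thesis unfolding windmill_edge_def using h assms
      by (intro disjI2 disjI1 bexI[of _ "j+1"] bexI[of _ "i+1"]) auto
  next
    case False
    then have "i = n-1" using assms by simp
    then show ?thesis unfolding windmill_edge_def using h assms
      by (intro disjI2 bexI[of _ "j+1"]) auto
  qed
qed

lemma edge_0:
  assumes "n \<ge> 3"
  shows "windmill_edge m n 1 y \<longleftrightarrow> (\<exists>k<m. y = k*(n-1)+2)"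
proof
  assume "windmill_edge m n 1 y"
  then consider (a) k where "k \<in> {1..m}" "y = (k - 1) * (n - 1) + 2"
    | (b) k i' where "k \<in> {1..m}" "i' \<in> {2..n-1}" "1 = (k-1)*(n-1)+i'"
    | (c) k where "k \<in> {1..m}" "1 = (k-1)*(n-1)+n"
    unfolding windmill_edge_def by blast
  then show "\<exists>k<m. y = k*(n-1)+2"
  proof cases
    case (a k) then show ?thesis by (intro exI[of _ "k-1"]) auto
  next
    case (b k i') then show ?thesis by auto
  next
    case (c k) then show ?thesis using assms by auto
  qed
next
  assume "\<exists>k<m. y = k*(n-1)+2"
  then obtain k where "k<m" "y = k*(n-1)+2" by blast
  then show "windmill_edge m n 1 y" unfolding windmill_edge_def
    by (intro disjI1 bexI[of _ "k+1"]) auto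
qed



lemma pow_Suc':
  assumes "A \<in> carrier_mat N N"
  shows "A ^\<^sub>m Suc k = A * A ^\<^sub>m k"
proof (induction k)
  case 0 then show ?case using assms by simp
next
  case (Suc k)
  have "A ^\<^sub>m Suc (Suc k) = (A * A ^\<^sub>m k) * A" using Suc by simp
  also have "\<dots> = A * (A ^\<^sub>m k * A)" by (rule assoc_mult_mat) (use assms in auto)
  finally show ?case by simp
qed

context
  fixes m n :: nat
  assumes m: "m \<ge> 1" and n: "n \<ge> 3"
begin

abbreviation "MM \<equiv> windmill_adj m n"
abbreviation "NN \<equiv> m * (n - 1) + 1"

lemma MM_carrier: "MM \<in> carrier_mat NN NN"
  unfolding windmill_adj_def by simp

lemma MM_idx: "a < NN \<Longrightarrow> c < NN \<Longrightarrow> MM $$ (a,c) = (if windmill_edge m n (a+1) (c+1) then 1 else 0)"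
  unfolding windmill_adj_def by simp

lemma MM_dims[simp]: "dim_row MM = NN" "dim_col MM = NN"
  unfolding windmill_adj_def by simp_all

lemma mult_idx:
  assumes "A \<in> carrier_mat NN NN" "a < NN" "b < NN"
  shows "(MM * A) $$ (a,b) = (\<Sum>c\<in>{0..<NN}. MM $$ (a,c) * A $$ (c,b))"
proof -
  have "(MM * A) $$ (a,b) = row MM a \<bullet> col A b" using assms MM_carrier by auto
  also have "\<dots> = (\<Sum>c\<in>{0..<NN}. MM $$ (a,c) * A $$ (c,b))"
    unfolding scalar_prod_def using assms MM_carrier by (intro sum.cong) auto
  finally show ?thesis .
qed

lemma v_lt: "j < m \<Longrightarrow> i \<le> n - 1 \<Longrightarrow> j*(n-1)+i < NN"
proof -
  assume a: "j < m" "i \<le> n - 1"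
  then have "j + 1 \<le> m" by simp
  then have "(j+1)*(n-1) \<le> m*(n-1)" by (rule mult_le_mono1)
  moreover have "j*(n-1)+i \<le> (j+1)*(n-1)" using a by simp
  ultimately show ?thesis by linarith
qed

lemma stepV:
  assumes "j < m" "1 \<le> i" "i \<le> n - 1" "b < NN"
  shows "(MM ^\<^sub>m Suc p) $$ (j*(n-1)+i, b) =
     (if i < n - 1 then (MM ^\<^sub>m p) $$ (j*(n-1)+(i+1), b) else (MM ^\<^sub>m p) $$ (0, b))"
proof -
  define t where "t = (if i < n - 1 then j*(n-1)+(i+1) else 0)"
  have t: "t < NN" using v_lt[of j "i+1"] assms unfolding t_def by auto
  have a: "j*(n-1)+i < NN" using v_lt assms by auto
  have "(MM ^\<^sub>m Suc p) $$ (j*(n-1)+i, b) = (\<Sum>c\<in>{0..<NN}. MM $$ (j*(n-1)+i,c) * (MM ^\<^sub>m p) $$ (c,b))"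
    using pow_Suc'[OF MM_carrier] mult_idx[OF pow_carrier_mat[OF MM_carrier] a assms(4)] by simp
  also have "\<dots> = (\<Sum>c\<in>{0..<NN}. if c = t then (MM ^\<^sub>m p) $$ (c,b) else 0)"
  proof (rule sum.cong[OF refl])
    fix c assume "c \<in> {0..<NN}"
    then have "MM $$ (j*(n-1)+i,c) = (if windmill_edge m n (j*(n-1)+i+1) (c+1) then 1 else 0)"
      using MM_idx a by simp
    also have "\<dots> = (if c = t then 1 else 0)"
      using edge_v[OF n assms(1-3), of "c+1"] unfolding t_def by auto
    finally show "MM $$ (j*(n-1)+i,c) * (MM ^\<^sub>m p) $$ (c,b) = (if c = t then (MM ^\<^sub>m p) $$ (c,b) else 0)"
      by simp
  qed
  also have "\<dots> = (MM ^\<^sub>m p) $$ (t,b)" using t by simp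
  finally show ?thesis unfolding t_def by simp
qed

lemma step0:
  assumes "b < NN"
  shows "(MM ^\<^sub>m Suc p) $$ (0, b) = (\<Sum>k<m. (MM ^\<^sub>m p) $$ (k*(n-1)+1, b))"
proof -
  have a: "0 < NN" by simp
  let ?S = "{c\<in>{0..<NN}. \<exists>k<m. c = k*(n-1)+1}"
  have "(MM ^\<^sub>m Suc p) $$ (0, b) = (\<Sum>c\<in>{0..<NN}. MM $$ (0,c) * (MM ^\<^sub>m p) $$ (c,b))"
    using pow_Suc'[OF MM_carrier] mult_idx[OF pow_carrier_mat[OF MM_carrier] a assms] by simp
  also have "\<dots> = (\<Sum>c\<in>{0..<NN}. if (\<exists>k<m. c = k*(n-1)+1) then (MM ^\<^sub>m p) $$ (c,b) else 0)"
  proof (rule sum.cong[OF refl])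
    fix c assume "c \<in> {0..<NN}"
    then have "MM $$ (0,c) = (if windmill_edge m n 1 (c+1) then 1 else 0)"
      using MM_idx a by simp
    also have "\<dots> = (if (\<exists>k<m. c = k*(n-1)+1) then 1 else 0)"
      using edge_0[OF n, of m "c+1"] by auto
    finally show "MM $$ (0,c) * (MM ^\<^sub>m p) $$ (c,b) = (if (\<exists>k<m. c = k*(n-1)+1) then (MM ^\<^sub>m p) $$ (c,b) else 0)"
      by auto
  qed
  also have "\<dots> = (\<Sum>c\<in>?S. (MM ^\<^sub>m p) $$ (c,b))"
    by (rule sum.inter_filter[symmetric]) simp
  also have "?S = (\<lambda>k. k*(n-1)+1) ` {..<m}"
    using v_lt[of _ 1] n by auto
  also have "(\<Sum>c\<in>(\<lambda>k. k*(n-1)+1) ` {..<m}. (MM ^\<^sub>m p) $$ (c,b)) = (\<Sum>k<m. (MM ^\<^sub>m p) $$ (k*(n-1)+1, b))"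
    by (rule sum.reindex_cong[OF _ refl refl]) (use n in \<open>auto simp: inj_on_def\<close>)
  finally show ?thesis .
qed

lemma walk:
  assumes "j < m" "1 \<le> i" "i + t \<le> n - 1" "b < NN"
  shows "(MM ^\<^sub>m (q + t)) $$ (j*(n-1)+i, b) = (MM ^\<^sub>m q) $$ (j*(n-1)+(i+t), b)"
  using assms(2,3)
proof (induction t arbitrary: i)
  case 0 then show ?case by simp
next
  case (Suc t)
  have "(MM ^\<^sub>m (q + Suc t)) $$ (j*(n-1)+i, b) = (MM ^\<^sub>m Suc (q + t)) $$ (j*(n-1)+i, b)" by simp
  also have "\<dots> = (MM ^\<^sub>m (q + t)) $$ (j*(n-1)+(i+1), b)"
    using stepV[OF assms(1) Suc.prems(1) _ assms(4), of "q+t"] Suc.prems by simp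
  also have "\<dots> = (MM ^\<^sub>m q) $$ (j*(n-1)+(i+1+t), b)"
    using Suc.IH[of "i+1"] Suc.prems by simp
  finally show ?case by simp
qed

lemma walk0:
  assumes "j < m" "1 \<le> i" "i \<le> n - 1" "b < NN"
  shows "(MM ^\<^sub>m (q + (n - i))) $$ (j*(n-1)+i, b) = (MM ^\<^sub>m q) $$ (0, b)"
proof -
  have "q + (n - i) = Suc q + (n - 1 - i)" using assms n by simp
  then have "(MM ^\<^sub>m (q + (n - i))) $$ (j*(n-1)+i, b) = (MM ^\<^sub>m Suc q) $$ (j*(n-1)+(n-1), b)"
    using walk[OF assms(1,2) _ assms(4), of "n-1-i" "Suc q"] assms by simp
  also have "\<dots> = (MM ^\<^sub>m q) $$ (0, b)"
    using stepV[OF assms(1) _ _ assms(4), of "n-1" q] n by simp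
  finally show ?thesis .
qed

lemma zero_ret:
  assumes "b < NN"
  shows "(MM ^\<^sub>m (q + n)) $$ (0, b) = real m * (MM ^\<^sub>m q) $$ (0, b)"
proof -
  have e: "q + n = Suc (q + (n - 1))" using n by simp
  have "(MM ^\<^sub>m (q + n)) $$ (0, b) = (\<Sum>k<m. (MM ^\<^sub>m (q + (n-1))) $$ (k*(n-1)+1, b))"
    unfolding e by (rule step0[OF assms])
  also have "\<dots> = (\<Sum>k<m. (MM ^\<^sub>m q) $$ (0, b))"
    using walk0[of _ 1 b q] assms n by simp
  finally show ?thesis by simp
qed

lemma key_entry:
  assumes "p \<ge> n - 1" "a < NN" "b < NN"
  shows "(MM ^\<^sub>m (p + n)) $$ (a, b) = real m * (MM ^\<^sub>m p) $$ (a, b)"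
proof (cases "a = 0")
  case True then show ?thesis using zero_ret assms by simp
next
  case False
  define j where "j = (a - 1) div (n - 1)"
  define i where "i = (a - 1) mod (n - 1) + 1"
  have "a - 1 = j*(n-1) + (i - 1)" unfolding i_def j_def using div_mult_mod_eq[of "a-1" "n-1"] by linarith
  then have av: "a = j*(n-1)+i" using False unfolding i_def by simp
  have i: "1 \<le> i" "i \<le> n - 1" unfolding i_def using n by (auto simp: Suc_le_eq)
  have "a - 1 < m * (n - 1)" using assms False by simp
  then have j: "j < m" unfolding j_def using n by (simp add: less_mult_imp_div_less)
  have e1: "p + n = (p + i) + (n - i)" using i by simp
  have e2: "p + i = (p + i - n) + n" using i assms by simp
  have e3: "p = (p + i - n) + (n - i)" using i assms by simp
  have "(MM ^\<^sub>m (p + n)) $$ (a, b) = (MM ^\<^sub>m (p + i)) $$ (0, b)"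
    unfolding av e1 using walk0[OF j i assms(3)] by simp
  also have "\<dots> = real m * (MM ^\<^sub>m (p + i - n)) $$ (0, b)"
    using zero_ret[OF assms(3), of "p+i-n"] e2 by simp
  also have "\<dots> = real m * (MM ^\<^sub>m p) $$ (a, b)"
    using walk0[OF j i assms(3), of "p+i-n"] e3 av by simp
  finally show ?thesis .
qed

lemma key_mat:
  assumes "p \<ge> n - 1"
  shows "MM ^\<^sub>m (p + n) = real m \<cdot>\<^sub>m MM ^\<^sub>m p"
proof (rule eq_matI)
  have d: "dim_row (MM ^\<^sub>m q) = NN" "dim_col (MM ^\<^sub>m q) = NN" for q
    using pow_mat_dim_square[OF MM_carrier] by blast+
  fix i j assume "i < dim_row (real m \<cdot>\<^sub>m MM ^\<^sub>m p)" "j < dim_col (real m \<cdot>\<^sub>m MM ^\<^sub>m p)"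
  then have ij: "i < NN" "j < NN" using d by auto
  then show "(MM ^\<^sub>m (p + n)) $$ (i, j) = (real m \<cdot>\<^sub>m MM ^\<^sub>m p) $$ (i, j)"
    using key_entry[OF assms ij] d by simp
next
  have d: "dim_row (MM ^\<^sub>m q) = NN" "dim_col (MM ^\<^sub>m q) = NN" for q
    using pow_mat_dim_square[OF MM_carrier] by blast+
  show "dim_row (MM ^\<^sub>m (p + n)) = dim_row (real m \<cdot>\<^sub>m MM ^\<^sub>m p)"
    "dim_col (MM ^\<^sub>m (p + n)) = dim_col (real m \<cdot>\<^sub>m MM ^\<^sub>m p)" unfolding index_smult_mat(2,3) d by simp_all
qed

end

lemma smult_smult_mat': "(a::real) \<cdot>\<^sub>m (b \<cdot>\<^sub>m A) = (a * b) \<cdot>\<^sub>m A"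
  by (rule eq_matI) auto

lemma iter_mat:
  assumes "m \<ge> 1" "n \<ge> 3"
  shows "windmill_adj m n ^\<^sub>m (n - 1 + k * n) = real m ^ k \<cdot>\<^sub>m windmill_adj m n ^\<^sub>m (n - 1)"
proof (induction k)
  case 0
  have "windmill_adj m n ^\<^sub>m (n - 1) \<in> carrier_mat (m * (n - 1) + 1) (m * (n - 1) + 1)"
    using MM_carrier[OF assms] by simp
  then show ?case by (intro eq_matI) auto
next
  case (Suc k)
  have "windmill_adj m n ^\<^sub>m (n - 1 + Suc k * n) = windmill_adj m n ^\<^sub>m ((n - 1 + k * n) + n)"
    by (simp add: algebra_simps)
  also have "\<dots> = real m \<cdot>\<^sub>m windmill_adj m n ^\<^sub>m (n - 1 + k * n)"
    by (rule key_mat[OF assms]) simp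
  also have "\<dots> = real m ^ Suc k \<cdot>\<^sub>m windmill_adj m n ^\<^sub>m (n - 1)"
    unfolding Suc smult_smult_mat' by simp
  finally show ?case .
qed

theorem theorem3p1:
  fixes m n :: nat
  assumes "m \<ge> 2" and "n \<ge> 3"
  defines "M \<equiv> windmill_adj m n"
  defines "N \<equiv> m * (n - 1) + 1"
  shows "M ^\<^sub>m (2 * n - 1) = real m \<cdot>\<^sub>m M ^\<^sub>m (n - 1)
    \<and> M ^\<^sub>m (n - 1) \<noteq> 0\<^sub>m N N
    \<and> M ^\<^sub>m (2 * n - 2) \<noteq> real m \<cdot>\<^sub>m M ^\<^sub>m (n - 2)
    \<and> M ^\<^sub>m n \<noteq> real m \<cdot>\<^sub>m 1\<^sub>m N
    \<and> M ^\<^sub>m (n ^ 2 - 1) = real m ^ (n - 1) \<cdot>\<^sub>m M ^\<^sub>m (n - 1)"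
proof -
  have m1: "m \<ge> 1" using assms by simp
  note n = assms(2)
  have M0: "M ^\<^sub>m 0 = 1\<^sub>m N" unfolding M_def N_def using MM_dims[OF m1 n] by simp
  have N1: "1 < N" "n - 1 < N" unfolding N_def using assms by (auto intro: v_lt[OF m1 n, of 0 "n-1", simplified])
  have P1: "M ^\<^sub>m (2 * n - 1) = real m \<cdot>\<^sub>m M ^\<^sub>m (n - 1)"
    unfolding M_def using key_mat[OF m1 n, of "n-1"] n by (simp add: mult_2)
  have P5: "M ^\<^sub>m (n ^ 2 - 1) = real m ^ (n - 1) \<cdot>\<^sub>m M ^\<^sub>m (n - 1)"
  proof -
    have "n ^ 2 - 1 = n - 1 + (n - 1) * n" using n by (simp add: power2_eq_square algebra_simps)
    then show ?thesis unfolding M_def using iter_mat[OF m1 n, of "n-1"] by simp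
  qed
  have E2: "(M ^\<^sub>m (n - 1)) $$ (1, 0) = 1"
    using walk0[OF m1 n, of 0 1 0 0] M0 N1 n unfolding M_def N_def by simp
  have P2: "M ^\<^sub>m (n - 1) \<noteq> 0\<^sub>m N N"
  proof
    assume "M ^\<^sub>m (n - 1) = 0\<^sub>m N N"
    then have "(M ^\<^sub>m (n - 1)) $$ (1, 0) = 0" using N1 by simp
    then show False using E2 by simp
  qed
  have b: "n - 1 < N" using N1 by simp
  have E3a: "(M ^\<^sub>m (n - 2)) $$ (1, n - 1) = 1"
  proof -
    have w: "(windmill_adj m n ^\<^sub>m (0 + (n - 2))) $$ (0*(n-1)+1, n - 1) = (windmill_adj m n ^\<^sub>m 0) $$ (0*(n-1)+(1 + (n-2)), n - 1)"
      by (rule walk[OF m1 n]) (use m1 n b[unfolded N_def] in auto)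
    have e: "0*(n-1)+(1 + (n-2)) = n - 1" "0 + (n - 2) = n - 2" "0*(n-1)+1 = (1::nat)" using n by auto
    have "(M ^\<^sub>m (n - 2)) $$ (1, n - 1) = (M ^\<^sub>m 0) $$ (n - 1, n - 1)"
      using w unfolding e M_def .
    also have "\<dots> = 1" unfolding M0 using b by simp
    finally show ?thesis .
  qed
  have E3b: "(M ^\<^sub>m (2 * n - 2)) $$ (1, n - 1) = 1"
  proof -
    have e: "2 * n - 2 = (n - 1) + (n - 1)" by simp
    have e2: "n - 1 = Suc (n - 2)" using n by simp
    have w: "(windmill_adj m n ^\<^sub>m ((n - 1) + (n - 1))) $$ (0*(n-1)+1, n - 1) = (windmill_adj m n ^\<^sub>m (n - 1)) $$ (0, n - 1)"
      by (rule walk0[OF m1 n]) (use m1 n b[unfolded N_def] in auto)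
    have s0: "(windmill_adj m n ^\<^sub>m Suc (n - 2)) $$ (0, n - 1) = (\<Sum>k<m. (windmill_adj m n ^\<^sub>m (n - 2)) $$ (k*(n-1)+1, n - 1))"
      by (rule step0[OF m1 n]) (use b[unfolded N_def] in auto)
    have "(M ^\<^sub>m (2 * n - 2)) $$ (1, n - 1) = (\<Sum>k<m. (M ^\<^sub>m (n - 2)) $$ (k*(n-1)+1, n - 1))"
      using w s0 unfolding e M_def e2[symmetric] by simp
    also have "\<dots> = (\<Sum>k<m. if k = 0 then 1 else 0)"
    proof (rule sum.cong[OF refl])
      fix k assume k: "k \<in> {..<m}"
      have "(M ^\<^sub>m (0 + (n - 2))) $$ (k*(n-1)+1, n - 1) = (M ^\<^sub>m 0) $$ (k*(n-1)+(1 + (n-2)), n - 1)"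
        unfolding M_def using walk[OF m1 n, of k 1 "n-2" "n-1" 0] m1 n b k unfolding N_def by simp
      moreover have "k*(n-1)+(1 + (n-2)) < N" unfolding N_def using v_lt[OF m1 n, of k "n-1"] k n by simp
      moreover have "k*(n-1)+(1 + (n-2)) = n - 1 \<longleftrightarrow> k = 0"
      proof -
        have h: "1 + (n - 2) = n - 1" using n by simp
        have d: "n - 1 > 0" using n by simp
        have g: "\<And>d::nat. d > 0 \<Longrightarrow> (k*d + d = d) = (k = 0)" by simp
        show ?thesis unfolding h by (rule g[OF d])
      qed
      ultimately show "(M ^\<^sub>m (n - 2)) $$ (k*(n-1)+1, n - 1) = (if k = 0 then 1 else 0)"
        using M0 b by auto
    qed
    also have "\<dots> = 1" using m1 by simp
    finally show ?thesis .
  qed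
  have P3: "M ^\<^sub>m (2 * n - 2) \<noteq> real m \<cdot>\<^sub>m M ^\<^sub>m (n - 2)"
  proof
    assume h: "M ^\<^sub>m (2 * n - 2) = real m \<cdot>\<^sub>m M ^\<^sub>m (n - 2)"
    have d: "dim_row (M ^\<^sub>m (n - 2)) = N" "dim_col (M ^\<^sub>m (n - 2)) = N"
      unfolding M_def N_def using pow_mat_dim_square[OF MM_carrier[OF m1 n]] by blast+
    have "(M ^\<^sub>m (2 * n - 2)) $$ (1, n - 1) = real m * (M ^\<^sub>m (n - 2)) $$ (1, n - 1)"
      unfolding h using d N1 by simp
    then show False using E3a E3b assms(1) by simp
  qed
  have E4: "(M ^\<^sub>m n) $$ (1, 1) = 1"
  proof -
    have "(M ^\<^sub>m (1 + (n - 1))) $$ (0*(n-1)+1, 1) = (M ^\<^sub>m 1) $$ (0, 1)"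
      unfolding M_def using walk0[OF m1 n, of 0 1 1 1] m1 n N1 unfolding N_def by simp
    also have "\<dots> = (\<Sum>k<m. (M ^\<^sub>m 0) $$ (k*(n-1)+1, 1))"
      unfolding M_def using step0[OF m1 n, of 1 0] m1 N1 unfolding N_def by simp
    also have "\<dots> = (\<Sum>k<m. if k = 0 then 1 else 0)"
    proof (rule sum.cong[OF refl])
      fix k assume k: "k \<in> {..<m}"
      have "k*(n-1)+1 < N" unfolding N_def using v_lt[OF m1 n, of k 1] k n by simp
      moreover have "k*(n-1)+1 = 1 \<longleftrightarrow> k = 0" using n by simp
      ultimately show "(M ^\<^sub>m 0) $$ (k*(n-1)+1, 1) = (if k = 0 then 1 else 0)"
        using M0 N1 by auto
    qed
    also have "\<dots> = 1" using m1 by simp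
    finally show ?thesis using n by simp
  qed
  have P4: "M ^\<^sub>m n \<noteq> real m \<cdot>\<^sub>m 1\<^sub>m N"
  proof
    assume h: "M ^\<^sub>m n = real m \<cdot>\<^sub>m 1\<^sub>m N"
    have "(M ^\<^sub>m n) $$ (1, 1) = real m" unfolding h using N1 by simp
    then show False using E4 assms(1) by simp
  qed
  show ?thesis using P1 P2 P3 P4 P5 by blast
qed

end
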